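(* Let $(H_1,+_1,\circ_1)$ and $(H_2,+_2,\circ_2)$ be commutative multiplicative hyperrings with identity. Let $P_1$ be a weakly sdf-absorbing strong $\mathcal{C}$-hyperideal of $H_1$ that is not an sdf-absorbing hyperideal, and let $P_2$ be a weakly sdf-absorbing strong $\mathcal{C}$-hyperideal of $H_2$ that is not an sdf-absorbing hyperideal. Then the following are equivalent: (i) $P_1\times P_2$ is a weakly sdf-absorbing hyperideal of $H_1\times H_2$ but is not an sdf-absorbing hyperideal; (ii) $P_1\times P_2$ is a weakly sdf-absorbing hyperideal of $H_1\times H_2$; (iii) if $x^2-y^2\subseteq P_1$ for $x,y\in H_1$, then $0\in x^2-y^2$, and if $u^2-v^2\subseteq P_2$ for $u,v\in H_2$, then $0\in u^2-v^2$; (iv) if $a^2-b^2\subseteq P_1\times P_2$ for $(0,0)\neq a,b\in H_1\times H_2$, then $(0,0)\in a^2-b^2$.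
   Context: A commutative multiplicative hyperring $(H,+,\circ)$ consists of an abelian group $(H,+)$ and an associative, commutative hyperoperation $\circ: H\times H\to P^*(H)$ with $x\circ(y+z)\subseteq x\circ y+x\circ z$ and $x\circ(-y)=-(x\circ y)=(-x)\circ y$. For subsets $A,B$, $A\circ B=\bigcup_{a\in A,b\in B}a\circ b$, $A\pm B=\{a\pm b\}$; $x^2=x\circ x$. Identity: $x\in x\circ 1$ for all $x$. $H_1\times H_2$ is the hyperring with $(x_1,x_2)+(y_1,y_2)=(x_1+_1y_1,x_2+_2y_2)$ and $(x_1,x_2)\circ(y_1,y_2)=\{(a,b): a\in x_1\circ_1y_1, b\in x_2\circ_2y_2\}$. A hyperideal is a nonempty $P$ with $x-y\in P$ and $r\circ x\subseteq P$ for $x,y\in P$, $r\in H$. Let $\mathcal{C}=\{c_1\circ\cdots\circ c_n: c_i\in H\}$ and $\mathfrak{C}=\{\sum_{i=1}^m C_i: C_i\in\mathcal{C}\}$; $P$ is a strong $\mathcal{C}$-hyperideal if for every $D\in\mathfrak{C}$, $D\cap P\neq\varnothing$ implies $D\subseteq P$. A proper hyperideal $P$ is sdf-absorbing if whenever $x,y$ are nonzero and $x^2-y^2\subseteq P$, then $x-y\in P$ or $x+y\in P$; it is weakly sdf-absorbing if whenever $x,y$ are nonzero and $0\notin x^2-y^2\subseteq P$, then $x-y\in P$ or $x+y\in P$. *)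

theory Defs
  imports Main "HOL-Library.Product_Plus"
begin

text \<open>A commutative multiplicative hyperring: the additive group is the ambient
type (class ab_group_add); the hyperoperation is a parameter
m :: 'a => 'a => 'a set.\<close>

definition hsetmult :: "('a \<Rightarrow> 'a \<Rightarrow> 'a set) \<Rightarrow> 'a set \<Rightarrow> 'a set \<Rightarrow> 'a set" where
  "hsetmult m A B = (\<Union>a\<in>A. \<Union>b\<in>B. m a b)"

definition setplus :: "'a::plus set \<Rightarrow> 'a set \<Rightarrow> 'a set" where
  "setplus A B = {a + b | a b. a \<in> A \<and> b \<in> B}"

definition setminus :: "'a::minus set \<Rightarrow> 'a set \<Rightarrow> 'a set" where
  "setminus A B = {a - b | a b. a \<in> A \<and> b \<in> B}"

definition hsq :: "('a \<Rightarrow> 'a \<Rightarrow> 'a set) \<Rightarrow> 'a \<Rightarrow> 'a set" where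
  "hsq m x = m x x"

definition comm_mult_hyperring :: "('a::ab_group_add \<Rightarrow> 'a \<Rightarrow> 'a set) \<Rightarrow> bool" where
  "comm_mult_hyperring m \<longleftrightarrow>
     (\<forall>x y. m x y \<noteq> {}) \<and>
     (\<forall>x y z. hsetmult m (m x y) {z} = hsetmult m {x} (m y z)) \<and>
     (\<forall>x y. m x y = m y x) \<and>
     (\<forall>x y z. m x (y + z) \<subseteq> setplus (m x y) (m x z)) \<and>
     (\<forall>x y. m x (- y) = uminus ` (m x y) \<and> m (- x) y = uminus ` (m x y))"

definition has_identity :: "('a \<Rightarrow> 'a \<Rightarrow> 'a set) \<Rightarrow> bool" where
  "has_identity m \<longleftrightarrow> (\<exists>e. \<forall>x. x \<in> m x e)"

definition prod_hmult :: "('a \<Rightarrow> 'a \<Rightarrow> 'a set) \<Rightarrow> ('b \<Rightarrow> 'b \<Rightarrow> 'b set)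
    \<Rightarrow> ('a \<times> 'b) \<Rightarrow> ('a \<times> 'b) \<Rightarrow> ('a \<times> 'b) set" where
  "prod_hmult m1 m2 x y = m1 (fst x) (fst y) \<times> m2 (snd x) (snd y)"

definition hyperideal :: "('a::ab_group_add \<Rightarrow> 'a \<Rightarrow> 'a set) \<Rightarrow> 'a set \<Rightarrow> bool" where
  "hyperideal m P \<longleftrightarrow> P \<noteq> {} \<and> (\<forall>x\<in>P. \<forall>y\<in>P. x - y \<in> P) \<and>
     (\<forall>r. \<forall>x\<in>P. m r x \<subseteq> P)"

fun hlprod :: "('a \<Rightarrow> 'a \<Rightarrow> 'a set) \<Rightarrow> 'a list \<Rightarrow> 'a set" where
  "hlprod m [] = {}"
| "hlprod m [c] = {c}"
| "hlprod m (c # cs) = hsetmult m {c} (hlprod m cs)"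

fun lsetsum :: "'a::plus set list \<Rightarrow> 'a set" where
  "lsetsum [] = {}"
| "lsetsum [A] = A"
| "lsetsum (A # As) = setplus A (lsetsum As)"

definition classC :: "('a \<Rightarrow> 'a \<Rightarrow> 'a set) \<Rightarrow> 'a set set" where
  "classC m = {hlprod m cs | cs. cs \<noteq> []}"

definition classFrakC :: "('a::plus \<Rightarrow> 'a \<Rightarrow> 'a set) \<Rightarrow> 'a set set" where
  "classFrakC m = {lsetsum Cs | Cs. Cs \<noteq> [] \<and> set Cs \<subseteq> classC m}"

definition strong_C_hyperideal :: "('a::ab_group_add \<Rightarrow> 'a \<Rightarrow> 'a set) \<Rightarrow> 'a set \<Rightarrow> bool" where
  "strong_C_hyperideal m P \<longleftrightarrow> hyperideal m P \<and>
     (\<forall>D\<in>classFrakC m. D \<inter> P \<noteq> {} \<longrightarrow> D \<subseteq> P)"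

definition sdf_absorbing :: "('a::ab_group_add \<Rightarrow> 'a \<Rightarrow> 'a set) \<Rightarrow> 'a set \<Rightarrow> bool" where
  "sdf_absorbing m P \<longleftrightarrow> hyperideal m P \<and> P \<noteq> UNIV \<and>
     (\<forall>x y. x \<noteq> 0 \<longrightarrow> y \<noteq> 0 \<longrightarrow> setminus (hsq m x) (hsq m y) \<subseteq> P \<longrightarrow>
        x - y \<in> P \<or> x + y \<in> P)"

definition weakly_sdf_absorbing :: "('a::ab_group_add \<Rightarrow> 'a \<Rightarrow> 'a set) \<Rightarrow> 'a set \<Rightarrow> bool" where
  "weakly_sdf_absorbing m P \<longleftrightarrow> hyperideal m P \<and> P \<noteq> UNIV \<and>
     (\<forall>x y. x \<noteq> 0 \<longrightarrow> y \<noteq> 0 \<longrightarrow> 0 \<notin> setminus (hsq m x) (hsq m y) \<longrightarrow>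
        setminus (hsq m x) (hsq m y) \<subseteq> P \<longrightarrow> x - y \<in> P \<or> x + y \<in> P)"

end

theory Submission
  imports Defs
begin

lemma sq_prod: "hsq (prod_hmult m1 m2) a = hsq m1 (fst a) \<times> hsq m2 (snd a)"
  by (simp add: hsq_def prod_hmult_def)

lemma sm_prod: "setminus (A \<times> B) (C \<times> D) = setminus A C \<times> setminus B D"
proof (rule set_eqI)
  fix z :: "'a \<times> 'b"
  obtain p q where z: "z = (p,q)" by (cases z)
  show "z \<in> setminus (A \<times> B) (C \<times> D) \<longleftrightarrow> z \<in> setminus A C \<times> setminus B D"
  proof
    assume "z \<in> setminus (A \<times> B) (C \<times> D)"
    then obtain s t where "s \<in> A \<times> B" "t \<in> C \<times> D" "z = s - t" unfolding setminus_def by blast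
    then show "z \<in> setminus A C \<times> setminus B D" unfolding setminus_def
      by (cases s; cases t) auto
  next
    assume "z \<in> setminus A C \<times> setminus B D"
    then obtain a c b d where "a \<in> A" "c \<in> C" "b \<in> B" "d \<in> D" "p = a - c" "q = b - d"
      unfolding setminus_def z by blast
    then have "z = (a,b) - (c,d)" "(a,b) \<in> A \<times> B" "(c,d) \<in> C \<times> D" using z by auto
    then show "z \<in> setminus (A \<times> B) (C \<times> D)" unfolding setminus_def by blast
  qed
qed

lemma sm_ne: "comm_mult_hyperring m \<Longrightarrow> setminus (hsq m x) (hsq m y) \<noteq> {}"
proof -
  assume "comm_mult_hyperring m"
  then have "m x x \<noteq> {}" "m y y \<noteq> {}" unfolding comm_mult_hyperring_def by auto
  then obtain a b where "a \<in> m x x" "b \<in> m y y" by blast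
  then have "a - b \<in> setminus (hsq m x) (hsq m y)" unfolding setminus_def hsq_def by blast
  then show ?thesis by blast
qed

lemma zero_in: "hyperideal m P \<Longrightarrow> (0::'a::ab_group_add) \<in> P"
  unfolding hyperideal_def by (metis all_not_in_conv diff_self)

lemma zsq_in: "hyperideal m P \<Longrightarrow> hsq m (0::'a::ab_group_add) \<subseteq> P"
proof -
  assume h: "hyperideal m P"
  then have "0 \<in> P" by (rule zero_in)
  with h show ?thesis unfolding hyperideal_def hsq_def by blast
qed

lemma sm_sub: "A \<subseteq> P \<Longrightarrow> B \<subseteq> P \<Longrightarrow> hyperideal m P \<Longrightarrow> setminus A B \<subseteq> P"
  unfolding hyperideal_def setminus_def by blast

lemma bad: "weakly_sdf_absorbing m P \<Longrightarrow> \<not> sdf_absorbing m P \<Longrightarrow>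
   \<exists>x y. x \<noteq> 0 \<and> y \<noteq> 0 \<and> setminus (hsq m x) (hsq m y) \<subseteq> P \<and> x - y \<notin> P \<and> x + y \<notin> P"
  unfolding weakly_sdf_absorbing_def sdf_absorbing_def by blast

lemma prod_ideal: "hyperideal m1 P1 \<Longrightarrow> hyperideal m2 P2 \<Longrightarrow> hyperideal (prod_hmult m1 m2) (P1 \<times> P2)"
proof -
  assume h1: "hyperideal m1 P1" and h2: "hyperideal m2 P2"
  have "P1 \<times> P2 \<noteq> {}" using zero_in[OF h1] zero_in[OF h2] by blast
  moreover have "\<forall>x\<in>P1 \<times> P2. \<forall>y\<in>P1 \<times> P2. x - y \<in> P1 \<times> P2"
    using h1 h2 unfolding hyperideal_def by (simp add: mem_Times_iff)
  moreover have "\<forall>r. \<forall>x\<in>P1 \<times> P2. prod_hmult m1 m2 r x \<subseteq> P1 \<times> P2"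
  proof (intro allI ballI)
    fix r x assume "x \<in> P1 \<times> P2"
    then have "m1 (fst r) (fst x) \<subseteq> P1" "m2 (snd r) (snd x) \<subseteq> P2"
      using h1 h2 unfolding hyperideal_def by (auto simp: mem_Times_iff)
    then show "prod_hmult m1 m2 r x \<subseteq> P1 \<times> P2" unfolding prod_hmult_def by blast
  qed
  ultimately show ?thesis unfolding hyperideal_def by blast
qed

lemma zero_times: "(0::'a::zero \<times> 'b::zero) \<in> A \<times> B \<longleftrightarrow> 0 \<in> A \<and> 0 \<in> B"
  by (simp add: zero_prod_def)

lemma pair_nz1: "x \<noteq> 0 \<Longrightarrow> (x, y) \<noteq> (0::'a::zero \<times> 'b::zero)"
  by (simp add: zero_prod_def)

lemma pair_nz2: "y \<noteq> 0 \<Longrightarrow> (x, y) \<noteq> (0::'a::zero \<times> 'b::zero)"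
  by (simp add: zero_prod_def)

lemma pair_mem: "(x, y) - (x', y') \<in> A \<times> B \<or> (x, y) + (x', y') \<in> A \<times> B \<Longrightarrow>
   (x - x' \<in> A \<and> y - y' \<in> (B::'b::ab_group_add set)) \<or> (x + x' \<in> (A::'a::ab_group_add set) \<and> y + y' \<in> B)"
  by (simp only: diff_Pair add_Pair mem_Times_iff fst_conv snd_conv)

lemma final_prop: "\<not> S \<Longrightarrow> (W \<longleftrightarrow> X) \<Longrightarrow> (X \<longleftrightarrow> Y) \<Longrightarrow>
  ((W \<and> \<not> S) \<longleftrightarrow> W) \<and> (W \<longleftrightarrow> X) \<and> (X \<longleftrightarrow> Y)"
  by blast

theorem mainTheorem19:
  fixes m1 :: "'a::ab_group_add \<Rightarrow> 'a \<Rightarrow> 'a set"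
    and m2 :: "'b::ab_group_add \<Rightarrow> 'b \<Rightarrow> 'b set"
    and P1 :: "'a set" and P2 :: "'b set"
  assumes H1: "comm_mult_hyperring m1" "has_identity m1"
    and H2: "comm_mult_hyperring m2" "has_identity m2"
    and P1: "weakly_sdf_absorbing m1 P1" "strong_C_hyperideal m1 P1" "\<not> sdf_absorbing m1 P1"
    and P2: "weakly_sdf_absorbing m2 P2" "strong_C_hyperideal m2 P2" "\<not> sdf_absorbing m2 P2"
  defines "m \<equiv> prod_hmult m1 m2"
  shows "((weakly_sdf_absorbing m (P1 \<times> P2) \<and> \<not> sdf_absorbing m (P1 \<times> P2))
            \<longleftrightarrow> weakly_sdf_absorbing m (P1 \<times> P2))
       \<and> (weakly_sdf_absorbing m (P1 \<times> P2) \<longleftrightarrow>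
            ((\<forall>x y. setminus (hsq m1 x) (hsq m1 y) \<subseteq> P1 \<longrightarrow> 0 \<in> setminus (hsq m1 x) (hsq m1 y)) \<and>
             (\<forall>u v. setminus (hsq m2 u) (hsq m2 v) \<subseteq> P2 \<longrightarrow> 0 \<in> setminus (hsq m2 u) (hsq m2 v))))
       \<and> (((\<forall>x y. setminus (hsq m1 x) (hsq m1 y) \<subseteq> P1 \<longrightarrow> 0 \<in> setminus (hsq m1 x) (hsq m1 y)) \<and>
             (\<forall>u v. setminus (hsq m2 u) (hsq m2 v) \<subseteq> P2 \<longrightarrow> 0 \<in> setminus (hsq m2 u) (hsq m2 v)))
            \<longleftrightarrow> (\<forall>a b. a \<noteq> 0 \<longrightarrow> b \<noteq> 0 \<longrightarrow> setminus (hsq m a) (hsq m b) \<subseteq> P1 \<times> P2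
                   \<longrightarrow> 0 \<in> setminus (hsq m a) (hsq m b)))"
proof -
  have I1: "hyperideal m1 P1" and I2: "hyperideal m2 P2" and NU1: "P1 \<noteq> UNIV"
    using P1(1) P2(1) unfolding weakly_sdf_absorbing_def by auto
  have I: "hyperideal m (P1 \<times> P2)" using prod_ideal[OF I1 I2] m_def by simp
  have NU: "P1 \<times> P2 \<noteq> UNIV" using NU1 by auto
  have SQ: "setminus (hsq m (x,u)) (hsq m (y,v)) =
      setminus (hsq m1 x) (hsq m1 y) \<times> setminus (hsq m2 u) (hsq m2 v)" for x y u v
    by (simp add: m_def sq_prod sm_prod)
  obtain x1 y1 where b1: "x1 \<noteq> 0" "y1 \<noteq> 0" "setminus (hsq m1 x1) (hsq m1 y1) \<subseteq> P1"
     "x1 - y1 \<notin> P1" "x1 + y1 \<notin> P1" using bad[OF P1(1) P1(3)] by blast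
  obtain x2 y2 where b2: "x2 \<noteq> 0" "y2 \<noteq> 0" "setminus (hsq m2 x2) (hsq m2 y2) \<subseteq> P2"
     "x2 - y2 \<notin> P2" "x2 + y2 \<notin> P2" using bad[OF P2(1) P2(3)] by blast
  have z2: "setminus (hsq m2 0) (hsq m2 0) \<subseteq> P2" using sm_sub[OF zsq_in[OF I2] zsq_in[OF I2] I2] .
  have notS: "\<not> sdf_absorbing m (P1 \<times> P2)"
  proof
    assume S: "sdf_absorbing m (P1 \<times> P2)"
    have "setminus (hsq m (x1,0)) (hsq m (y1,0)) \<subseteq> P1 \<times> P2"
      using SQ b1(3) z2 by auto
    moreover have "(x1,0::'b) \<noteq> 0" "(y1,0::'b) \<noteq> 0" using b1 by (auto simp: zero_prod_def)
    ultimately have "(x1,0) - (y1,0::'b) \<in> P1 \<times> P2 \<or> (x1,0) + (y1,0::'b) \<in> P1 \<times> P2"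
      using S unfolding sdf_absorbing_def by blast
    then show False using b1 by auto
  qed
  let ?C1 = "\<forall>x y. setminus (hsq m1 x) (hsq m1 y) \<subseteq> P1 \<longrightarrow> 0 \<in> setminus (hsq m1 x) (hsq m1 y)"
  let ?C2 = "\<forall>u v. setminus (hsq m2 u) (hsq m2 v) \<subseteq> P2 \<longrightarrow> 0 \<in> setminus (hsq m2 u) (hsq m2 v)"
  let ?C4 = "\<forall>a b. a \<noteq> 0 \<longrightarrow> b \<noteq> 0 \<longrightarrow> setminus (hsq m a) (hsq m b) \<subseteq> P1 \<times> P2
                   \<longrightarrow> 0 \<in> setminus (hsq m a) (hsq m b)"
  have c34: "?C1 \<and> ?C2 \<longleftrightarrow> ?C4"
  proof
    assume C: "?C1 \<and> ?C2"
    show ?C4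
    proof (intro allI impI)
      fix a b :: "'a \<times> 'b"
      assume "setminus (hsq m a) (hsq m b) \<subseteq> P1 \<times> P2"
      then have "setminus (hsq m1 (fst a)) (hsq m1 (fst b)) \<times> setminus (hsq m2 (snd a)) (hsq m2 (snd b)) \<subseteq> P1 \<times> P2"
        using SQ[of "fst a" "snd a" "fst b" "snd b"] by simp
      moreover have "setminus (hsq m1 (fst a)) (hsq m1 (fst b)) \<noteq> {}"
        "setminus (hsq m2 (snd a)) (hsq m2 (snd b)) \<noteq> {}" using sm_ne H1(1) H2(1) by auto
      ultimately have "setminus (hsq m1 (fst a)) (hsq m1 (fst b)) \<subseteq> P1"
        "setminus (hsq m2 (snd a)) (hsq m2 (snd b)) \<subseteq> P2" by (auto simp: subset_iff)
      then have "0 \<in> setminus (hsq m1 (fst a)) (hsq m1 (fst b)) \<times> setminus (hsq m2 (snd a)) (hsq m2 (snd b))"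
        using C by (simp add: zero_prod_def)
      then show "0 \<in> setminus (hsq m a) (hsq m b)"
        using SQ[of "fst a" "snd a" "fst b" "snd b"] by simp
    qed
  next
    assume C: ?C4
    have ?C1
    proof (intro allI impI)
      fix x y assume h: "setminus (hsq m1 x) (hsq m1 y) \<subseteq> P1"
      have "(x,x2) \<noteq> 0" "(y,y2) \<noteq> 0" using b2 pair_nz2 by auto
      moreover have "setminus (hsq m (x,x2)) (hsq m (y,y2)) \<subseteq> P1 \<times> P2" unfolding SQ using h b2(3) by (rule Sigma_mono)
      ultimately have "0 \<in> setminus (hsq m (x,x2)) (hsq m (y,y2))" using C by blast
      then show "0 \<in> setminus (hsq m1 x) (hsq m1 y)" unfolding SQ zero_times by simp
    qed
    moreover have ?C2
    proof (intro allI impI)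
      fix x y assume h: "setminus (hsq m2 x) (hsq m2 y) \<subseteq> P2"
      have "(x1,x) \<noteq> 0" "(y1,y) \<noteq> 0" using b1 pair_nz1 by auto
      moreover have "setminus (hsq m (x1,x)) (hsq m (y1,y)) \<subseteq> P1 \<times> P2" unfolding SQ using b1(3) h by (rule Sigma_mono)
      ultimately have "0 \<in> setminus (hsq m (x1,x)) (hsq m (y1,y))" using C by blast
      then show "0 \<in> setminus (hsq m2 x) (hsq m2 y)" unfolding SQ zero_times by simp
    qed
    ultimately show "?C1 \<and> ?C2" by blast
  qed
  have c24: "weakly_sdf_absorbing m (P1 \<times> P2) \<longleftrightarrow> ?C1 \<and> ?C2"
  proof
    assume W: "weakly_sdf_absorbing m (P1 \<times> P2)"
    note Wc = W[unfolded weakly_sdf_absorbing_def, THEN conjunct2, THEN conjunct2, rule_format]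
    have ?C1
    proof (intro allI impI)
      fix x y assume h: "setminus (hsq m1 x) (hsq m1 y) \<subseteq> P1"
      show "0 \<in> setminus (hsq m1 x) (hsq m1 y)"
      proof (rule ccontr)
        assume n: "0 \<notin> setminus (hsq m1 x) (hsq m1 y)"
        have "(x,x2) \<noteq> 0" "(y,y2) \<noteq> 0" using b2 pair_nz2 by auto
        moreover have "0 \<notin> setminus (hsq m (x,x2)) (hsq m (y,y2))" unfolding SQ zero_times using n by simp
        moreover have "setminus (hsq m (x,x2)) (hsq m (y,y2)) \<subseteq> P1 \<times> P2" unfolding SQ using h b2(3) by (rule Sigma_mono)
        ultimately have "(x,x2) - (y,y2) \<in> P1 \<times> P2 \<or> (x,x2) + (y,y2) \<in> P1 \<times> P2"
          by (rule Wc)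
        then show False using b2 by simp
      qed
    qed
    moreover have ?C2
    proof (intro allI impI)
      fix x y assume h: "setminus (hsq m2 x) (hsq m2 y) \<subseteq> P2"
      show "0 \<in> setminus (hsq m2 x) (hsq m2 y)"
      proof (rule ccontr)
        assume n: "0 \<notin> setminus (hsq m2 x) (hsq m2 y)"
        have "(x1,x) \<noteq> 0" "(y1,y) \<noteq> 0" using b1 pair_nz1 by auto
        moreover have "0 \<notin> setminus (hsq m (x1,x)) (hsq m (y1,y))" unfolding SQ zero_times using n by simp
        moreover have "setminus (hsq m (x1,x)) (hsq m (y1,y)) \<subseteq> P1 \<times> P2" unfolding SQ using b1(3) h by (rule Sigma_mono)
        ultimately have "(x1,x) - (y1,y) \<in> P1 \<times> P2 \<or> (x1,x) + (y1,y) \<in> P1 \<times> P2"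
          by (rule Wc)
        then show False using b1 by simp
      qed
    qed
    ultimately show "?C1 \<and> ?C2" by blast
  next
    assume "?C1 \<and> ?C2"
    then have C: ?C4 using c34 by blast
    show "weakly_sdf_absorbing m (P1 \<times> P2)"
      unfolding weakly_sdf_absorbing_def
    proof (intro conjI I NU allI impI)
      fix a b :: "'a \<times> 'b"
      assume ab: "a \<noteq> 0" "b \<noteq> 0" "0 \<notin> setminus (hsq m a) (hsq m b)"
        "setminus (hsq m a) (hsq m b) \<subseteq> P1 \<times> P2"
      have "0 \<in> setminus (hsq m a) (hsq m b)" by (rule C[rule_format, OF ab(1) ab(2) ab(4)])
      then have False using ab(3) by contradiction
      then show "a - b \<in> P1 \<times> P2 \<or> a + b \<in> P1 \<times> P2" ..
    qed
  qed
  show ?thesis by (rule final_prop[OF notS c24 c34])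
qed

end
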